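(* Let $G$ be a reaction network with one-dimensional stoichiometric subspace. If for a total-constant vector $c^*\in\mathbb R^{s-1}$ the index set $\mathcal H$ is empty, then for any rate-constant vector $\kappa\in\mathbb R^m_{>0}$, $G$ has either no positive steady states or infinitely many positive steady states in $\mathcal P_{c^*}$.
   Context: A reaction network $G$ has species $X_1,\dots,X_s$ and $m$ reactions $\sum_{i}\alpha_{ij}X_i\to\sum_i\beta_{ij}X_i$, $\alpha_{ij},\beta_{ij}\in\mathbb Z_{\ge0}$, $(\alpha_{1j},\dots,\alpha_{sj})\neq(\beta_{1j},\dots,\beta_{sj})$. $\mathcal N$ has entries $\beta_{ij}-\alpha_{ij}$, $S=\mathrm{im}\,\mathcal N$. For $\kappa\in\mathbb R^m_{>0}$, $f(\kappa;x)=\mathcal N(\kappa_1\prod_i x_i^{\alpha_{i1}},\dots,\kappa_m\prod_i x_i^{\alpha_{im}})^\top$. Since $S$ is one-dimensional, species are labelled so that $\beta_{11}-\alpha_{11}\ne0$. For $c\in\mathbb R^{s-1}$, $\mathcal P_c=\{x\in\mathbb R^s_{\ge0}:(\beta_{i1}-\alpha_{i1})x_1-(\beta_{11}-\alpha_{11})x_i=c_{i-1},\ i=2,\dots,s\}$. A positive steady state is $x\in\mathbb R^s_{>0}$ with $f(\kappa;x)=0$. Notation for $c^*$: $A_1=1,B_1=0$, $A_i=\frac{\beta_{i1}-\alpha_{i1}}{\beta_{11}-\alpha_{11}}$, $B_i=-\frac{c^*_{i-1}}{\beta_{11}-\alpha_{11}}$ ($i\ge2$). $[i]=\{k:A_k\ne0,B_k/A_k=B_i/A_i\}$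 if $A_i\ne0$, $[i]=\{k:A_k=0\}$ otherwise; species labelled so that $1,\dots,r$ represent the $r$ distinct classes. $\varphi_k=\min_{1\le j\le m}\sum_{i\in[k]}\alpha_{ij}$, $\gamma_{kj}=\sum_{i\in[k]}\alpha_{ij}-\varphi_k$. $\mathcal J=\{i:A_i\neq0\}$, $\mathcal H=\{k\in\{1,\dots,r\}\cap\mathcal J:\gamma_{k1},\dots,\gamma_{km}\text{ are not all the same}\}$. *)

theory Defs
  imports "HOL-Analysis.Analysis"
begin

text \<open>Species are indexed by 1..s, reactions by 1..m. alpha i j and beta i j are the
  stoichiometric coefficients of species i in reactant / product of reaction j.\<close>

definition stoich :: "(nat \<Rightarrow> nat \<Rightarrow> nat) \<Rightarrow> (nat \<Rightarrow> nat \<Rightarrow> nat) \<Rightarrow> nat \<Rightarrow> nat \<Rightarrow> real" where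
  "stoich \<alpha> \<beta> i j = real (\<beta> i j) - real (\<alpha> i j)"

definition reaction_network :: "nat \<Rightarrow> nat \<Rightarrow> (nat \<Rightarrow> nat \<Rightarrow> nat) \<Rightarrow> (nat \<Rightarrow> nat \<Rightarrow> nat) \<Rightarrow> bool" where
  "reaction_network s m \<alpha> \<beta> \<longleftrightarrow> 1 \<le> s \<and> 1 \<le> m \<and>
     (\<forall>j\<in>{1..m}. \<exists>i\<in>{1..s}. \<alpha> i j \<noteq> \<beta> i j)"

definition stoich_space :: "nat \<Rightarrow> nat \<Rightarrow> (nat \<Rightarrow> nat \<Rightarrow> nat) \<Rightarrow> (nat \<Rightarrow> nat \<Rightarrow> nat) \<Rightarrow> (nat \<Rightarrow> real) set" where
  "stoich_space s m \<alpha> \<beta> =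
     {x. \<exists>c :: nat \<Rightarrow> real. x = (\<lambda>i. if i \<in> {1..s} then (\<Sum>j=1..m. stoich \<alpha> \<beta> i j * c j) else 0)}"

definition one_dim_stoich :: "nat \<Rightarrow> nat \<Rightarrow> (nat \<Rightarrow> nat \<Rightarrow> nat) \<Rightarrow> (nat \<Rightarrow> nat \<Rightarrow> nat) \<Rightarrow> bool" where
  "one_dim_stoich s m \<alpha> \<beta> \<longleftrightarrow>
     (\<exists>v :: nat \<Rightarrow> real. v \<noteq> (\<lambda>_. 0) \<and> stoich_space s m \<alpha> \<beta> = {(\<lambda>i. t * v i) | t. True})"

definition mass_action :: "nat \<Rightarrow> nat \<Rightarrow> (nat \<Rightarrow> nat \<Rightarrow> nat) \<Rightarrow> (nat \<Rightarrow> nat \<Rightarrow> nat) \<Rightarrow>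
    (nat \<Rightarrow> real) \<Rightarrow> (nat \<Rightarrow> real) \<Rightarrow> nat \<Rightarrow> real" where
  "mass_action s m \<alpha> \<beta> \<kappa> x i =
     (\<Sum>j=1..m. stoich \<alpha> \<beta> i j * (\<kappa> j * (\<Prod>l=1..s. x l ^ \<alpha> l j)))"

text \<open>Stoichiometric compatibility class P_c (c indexed by 1..s-1); points of R^s are
  represented as functions vanishing outside 1..s.\<close>
definition compat_class :: "nat \<Rightarrow> (nat \<Rightarrow> nat \<Rightarrow> nat) \<Rightarrow> (nat \<Rightarrow> nat \<Rightarrow> nat) \<Rightarrow>
    (nat \<Rightarrow> real) \<Rightarrow> (nat \<Rightarrow> real) set" where
  "compat_class s \<alpha> \<beta> c =
     {x. (\<forall>i. i \<notin> {1..s} \<longrightarrow> x i = 0) \<and> (\<forall>i\<in>{1..s}. 0 \<le> x i) \<and>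
         (\<forall>i\<in>{2..s}. stoich \<alpha> \<beta> i 1 * x 1 - stoich \<alpha> \<beta> 1 1 * x i = c (i - 1))}"

definition pos_steady_states_in :: "nat \<Rightarrow> nat \<Rightarrow> (nat \<Rightarrow> nat \<Rightarrow> nat) \<Rightarrow> (nat \<Rightarrow> nat \<Rightarrow> nat) \<Rightarrow>
    (nat \<Rightarrow> real) \<Rightarrow> (nat \<Rightarrow> real) \<Rightarrow> (nat \<Rightarrow> real) set" where
  "pos_steady_states_in s m \<alpha> \<beta> \<kappa> c =
     {x \<in> compat_class s \<alpha> \<beta> c. (\<forall>i\<in>{1..s}. 0 < x i) \<and>
        (\<forall>i\<in>{1..s}. mass_action s m \<alpha> \<beta> \<kappa> x i = 0)}"

definition coefA :: "(nat \<Rightarrow> nat \<Rightarrow> nat) \<Rightarrow> (nat \<Rightarrow> nat \<Rightarrow> nat) \<Rightarrow> nat \<Rightarrow> real" where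
  "coefA \<alpha> \<beta> i = (if i = 1 then 1 else stoich \<alpha> \<beta> i 1 / stoich \<alpha> \<beta> 1 1)"

definition coefB :: "(nat \<Rightarrow> nat \<Rightarrow> nat) \<Rightarrow> (nat \<Rightarrow> nat \<Rightarrow> nat) \<Rightarrow> (nat \<Rightarrow> real) \<Rightarrow> nat \<Rightarrow> real" where
  "coefB \<alpha> \<beta> c i = (if i = 1 then 0 else - c (i - 1) / stoich \<alpha> \<beta> 1 1)"

definition species_class :: "nat \<Rightarrow> (nat \<Rightarrow> nat \<Rightarrow> nat) \<Rightarrow> (nat \<Rightarrow> nat \<Rightarrow> nat) \<Rightarrow> (nat \<Rightarrow> real) \<Rightarrow> nat \<Rightarrow> nat set" where
  "species_class s \<alpha> \<beta> c i =
     (if coefA \<alpha> \<beta> i \<noteq> 0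
      then {k\<in>{1..s}. coefA \<alpha> \<beta> k \<noteq> 0 \<and>
              coefB \<alpha> \<beta> c k / coefA \<alpha> \<beta> k = coefB \<alpha> \<beta> c i / coefA \<alpha> \<beta> i}
      else {k\<in>{1..s}. coefA \<alpha> \<beta> k = 0})"

definition phi :: "nat \<Rightarrow> nat \<Rightarrow> (nat \<Rightarrow> nat \<Rightarrow> nat) \<Rightarrow> (nat \<Rightarrow> nat \<Rightarrow> nat) \<Rightarrow> (nat \<Rightarrow> real) \<Rightarrow> nat \<Rightarrow> nat" where
  "phi s m \<alpha> \<beta> c k = Min ((\<lambda>j. \<Sum>i\<in>species_class s \<alpha> \<beta> c k. \<alpha> i j) ` {1..m})"

definition gamma :: "nat \<Rightarrow> nat \<Rightarrow> (nat \<Rightarrow> nat \<Rightarrow> nat) \<Rightarrow> (nat \<Rightarrow> nat \<Rightarrow> nat) \<Rightarrow> (nat \<Rightarrow> real) \<Rightarrow> nat \<Rightarrow> nat \<Rightarrow> nat" where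
  "gamma s m \<alpha> \<beta> c k j = (\<Sum>i\<in>species_class s \<alpha> \<beta> c k. \<alpha> i j) - phi s m \<alpha> \<beta> c k"

text \<open>The index set H, represented by the classes it indexes (each class [k], k in J, with
  non-constant gamma_{k1..km}); H is empty iff this set of classes is empty.\<close>
definition H_classes :: "nat \<Rightarrow> nat \<Rightarrow> (nat \<Rightarrow> nat \<Rightarrow> nat) \<Rightarrow> (nat \<Rightarrow> nat \<Rightarrow> nat) \<Rightarrow> (nat \<Rightarrow> real) \<Rightarrow> nat set set" where
  "H_classes s m \<alpha> \<beta> c =
     {species_class s \<alpha> \<beta> c k | k. k \<in> {1..s} \<and> coefA \<alpha> \<beta> k \<noteq> 0 \<and>
        \<not> (\<forall>j\<in>{1..m}. \<forall>j'\<in>{1..m}. gamma s m \<alpha> \<beta> c k j = gamma s m \<alpha> \<beta> c k j')}"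

end

theory Submission
  imports Defs
begin

lemma prod_ratio:
  fixes r :: "nat \<Rightarrow> real" and S :: "nat set" and \<alpha> :: "nat \<Rightarrow> nat \<Rightarrow> nat"
  assumes fin: "finite S"
    and H: "\<And>\<rho>. \<rho> \<in> r ` S \<Longrightarrow> \<rho> \<noteq> 1 \<Longrightarrow>
              (\<Sum>i\<in>{i\<in>S. r i = \<rho>}. \<alpha> i j) = (\<Sum>i\<in>{i\<in>S. r i = \<rho>}. \<alpha> i j')"
  shows "(\<Prod>i\<in>S. r i ^ \<alpha> i j) = (\<Prod>i\<in>S. r i ^ \<alpha> i j')"
proof -
  have eq: "(\<Prod>i\<in>S. r i ^ \<alpha> i k) = (\<Prod>\<rho>\<in>r ` S. \<rho> ^ (\<Sum>i\<in>{i\<in>S. r i = \<rho>}. \<alpha> i k))" for k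
  proof -
    have "(\<Prod>i\<in>S. r i ^ \<alpha> i k) = (\<Prod>\<rho>\<in>r ` S. \<Prod>i\<in>{i\<in>S. r i = \<rho>}. r i ^ \<alpha> i k)"
      by (rule prod.image_gen[OF fin])
    also have "\<dots> = (\<Prod>\<rho>\<in>r ` S. \<rho> ^ (\<Sum>i\<in>{i\<in>S. r i = \<rho>}. \<alpha> i k))"
      by (rule prod.cong) (auto simp: power_sum intro!: prod.cong)
    finally show ?thesis .
  qed
  show ?thesis unfolding eq
  proof (rule prod.cong[OF refl])
    fix \<rho> assume r: "\<rho> \<in> r ` S"
    show "\<rho> ^ (\<Sum>i\<in>{i\<in>S. r i = \<rho>}. \<alpha> i j) = \<rho> ^ (\<Sum>i\<in>{i\<in>S. r i = \<rho>}. \<alpha> i j')"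
    proof (cases "\<rho> = 1")
      case False then show ?thesis using H[OF r] by simp
    qed simp
  qed
qed

theorem lemma5p10:
  fixes s m :: nat and \<alpha> \<beta> :: "nat \<Rightarrow> nat \<Rightarrow> nat" and cstar :: "nat \<Rightarrow> real"
  assumes "reaction_network s m \<alpha> \<beta>"
    and "one_dim_stoich s m \<alpha> \<beta>"
    and "stoich \<alpha> \<beta> 1 1 \<noteq> 0"
    and "H_classes s m \<alpha> \<beta> cstar = {}"
  shows "\<forall>\<kappa> :: nat \<Rightarrow> real. (\<forall>j\<in>{1..m}. 0 < \<kappa> j) \<longrightarrow>
           (pos_steady_states_in s m \<alpha> \<beta> \<kappa> cstar = {} \<or>
            infinite (pos_steady_states_in s m \<alpha> \<beta> \<kappa> cstar))"
proof (intro allI impI)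
  fix \<kappa> :: "nat \<Rightarrow> real"
  assume \<kappa>: "\<forall>j\<in>{1..m}. 0 < \<kappa> j"
  let ?P = "pos_steady_states_in s m \<alpha> \<beta> \<kappa> cstar"
  define A where "A = coefA \<alpha> \<beta>"
  define B where "B = coefB \<alpha> \<beta> cstar"
  define d where "d = stoich \<alpha> \<beta> 1 1"
  have d0: "d \<noteq> 0" using assms(3) d_def by simp
  have s1: "1 \<le> s" using assms(1) unfolding reaction_network_def by simp
  have A1: "A 1 = 1" unfolding A_def coefA_def by simp
  show "?P = {} \<or> infinite ?P"
  proof (cases "?P = {}")
    case True then show ?thesis by simp
  next
    case False
    then obtain y where y: "y \<in> ?P" by blast
    have y0: "\<And>i. i \<notin> {1..s} \<Longrightarrow> y i = 0"
      and ypos: "\<And>i. i \<in> {1..s} \<Longrightarrow> 0 < y i"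
      and ylin: "\<And>i. i \<in> {2..s} \<Longrightarrow> stoich \<alpha> \<beta> i 1 * y 1 - d * y i = cstar (i - 1)"
      and yss: "\<And>i. i \<in> {1..s} \<Longrightarrow> mass_action s m \<alpha> \<beta> \<kappa> y i = 0"
      using y unfolding pos_steady_states_in_def compat_class_def d_def by auto
    have yA: "y i = A i * y 1 + B i" if i: "i \<in> {1..s}" for i
    proof (cases "i = 1")
      case True then show ?thesis by (simp add: A_def B_def coefA_def coefB_def)
    next
      case False
      then have "i \<in> {2..s}" using i by auto
      from ylin[OF this] have "stoich \<alpha> \<beta> i 1 * y 1 - d * y i = cstar (i - 1)" .
      then show ?thesis using False d0 unfolding d_def
        by (simp add: A_def B_def coefA_def coefB_def field_simps)
    qed
    define \<delta> where "\<delta> = Min ((\<lambda>i. y i / (\<bar>A i\<bar> + 1)) ` {1..s})"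
    have \<delta>pos: "0 < \<delta>" unfolding \<delta>_def using s1
      by (subst Min_gr_iff) (auto intro!: divide_pos_pos ypos)
    have \<delta>le: "\<delta> \<le> y i / (\<bar>A i\<bar> + 1)" if "i \<in> {1..s}" for i
      unfolding \<delta>_def by (rule Min_le) (use that in auto)
    define X where "X n = (\<lambda>i. if i \<in> {1..s} then y i + (\<delta> / (real n + 2)) * A i else 0)" for n :: nat
    have XP: "X n \<in> ?P" for n
    proof -
      define t where "t = \<delta> / (real n + 2)"
      have t0: "0 < t" unfolding t_def using \<delta>pos by simp
      have tl: "t < \<delta>" unfolding t_def using \<delta>pos by (simp add: field_simps add_pos_nonneg)
      define x where "x = X n"
      have xi: "x i = y i + t * A i" if "i \<in> {1..s}" for i
        using that unfolding x_def X_def t_def by simp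
      have xo: "x i = 0" if "i \<notin> {1..s}" for i
        using that unfolding x_def X_def by auto
      have xpos: "0 < x i" if i: "i \<in> {1..s}" for i
      proof -
        have "\<delta> * (\<bar>A i\<bar> + 1) \<le> y i" using \<delta>le[OF i] by (simp add: field_simps)
        moreover have "t * \<bar>A i\<bar> \<le> \<delta> * \<bar>A i\<bar>" using tl by (intro mult_right_mono) auto
        moreover have "- (t * \<bar>A i\<bar>) \<le> t * A i" using t0 by (simp add: abs_if)
        moreover have "\<delta> * (\<bar>A i\<bar> + 1) = \<delta> * \<bar>A i\<bar> + \<delta>" by (simp add: algebra_simps)
        ultimately show ?thesis using xi[OF i] \<delta>pos by linarith
      qed
      have xlin: "stoich \<alpha> \<beta> i 1 * x 1 - stoich \<alpha> \<beta> 1 1 * x i = cstar (i - 1)"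
        if i: "i \<in> {2..s}" for i
      proof -
        have i1: "i \<in> {1..s}" "i \<noteq> 1" using i by auto
        have "stoich \<alpha> \<beta> i 1 * x 1 - d * x i
              = (stoich \<alpha> \<beta> i 1 * y 1 - d * y i) + t * (stoich \<alpha> \<beta> i 1 - d * A i)"
          using xi[OF i1(1)] xi[of 1] s1 A1 by (simp add: algebra_simps)
        also have "stoich \<alpha> \<beta> i 1 - d * A i = 0"
          using i1 d0 by (simp add: A_def coefA_def d_def)
        finally show ?thesis using ylin[OF i] d_def by simp
      qed
      define r where "r i = x i / y i" for i
      have xr: "x i = r i * y i" if "i \<in> {1..s}" for i
        using ypos[OF that] unfolding r_def by simp
      have rA: "r i = 1 + t * A i / y i" if "i \<in> {1..s}" for i
        using ypos[OF that] xi[OF that] unfolding r_def by (simp add: field_simps)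
      have cls: "{i \<in> {1..s}. r i = r i0} = species_class s \<alpha> \<beta> cstar i0"
        if i0: "i0 \<in> {1..s}" and r1: "r i0 \<noteq> 1" for i0
      proof -
        have A0: "A i0 \<noteq> 0" using r1 rA[OF i0] by auto
        have key: "r i = r i0 \<longleftrightarrow> A i \<noteq> 0 \<and> B i / A i = B i0 / A i0"
          if i: "i \<in> {1..s}" for i
        proof (cases "A i = 0")
          case True then show ?thesis using rA[OF i] r1 by simp
        next
          case False
          have yi: "y i / A i = y 1 + B i / A i" using yA[OF i] False by (simp add: field_simps)
          have yi0: "y i0 / A i0 = y 1 + B i0 / A i0" using yA[OF i0] A0 by (simp add: field_simps)
          have "r i = r i0 \<longleftrightarrow> t * A i / y i = t * A i0 / y i0" using rA i i0 by auto
          also have "\<dots> \<longleftrightarrow> A i / y i = A i0 / y i0" using t0 by (simp only: times_divide_eq_right[symmetric] mult_cancel_left) simp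
          also have "\<dots> \<longleftrightarrow> inverse (A i / y i) = inverse (A i0 / y i0)"
            by (rule inverse_eq_iff_eq[symmetric])
          also have "\<dots> \<longleftrightarrow> y i / A i = y i0 / A i0" by simp
          also have "\<dots> \<longleftrightarrow> B i / A i = B i0 / A i0" using yi yi0 by simp
          finally show ?thesis using False by simp
        qed
        show ?thesis
        proof (rule set_eqI)
          fix i
          show "i \<in> {i \<in> {1..s}. r i = r i0} \<longleftrightarrow> i \<in> species_class s \<alpha> \<beta> cstar i0"
            unfolding species_class_def A_def[symmetric] B_def[symmetric] using A0 key[of i] by auto
        qed
      qed
      have sumeq: "(\<Sum>i\<in>species_class s \<alpha> \<beta> cstar k. \<alpha> i j) = (\<Sum>i\<in>species_class s \<alpha> \<beta> cstar k. \<alpha> i j')"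
        if k: "k \<in> {1..s}" "A k \<noteq> 0" and j: "j \<in> {1..m}" "j' \<in> {1..m}" for k j j'
      proof -
        have nk: "\<not> (k \<in> {1..s} \<and> coefA \<alpha> \<beta> k \<noteq> 0 \<and>
            \<not> (\<forall>j\<in>{1..m}. \<forall>j'\<in>{1..m}. gamma s m \<alpha> \<beta> cstar k j = gamma s m \<alpha> \<beta> cstar k j'))"
          using assms(4) unfolding H_classes_def by blast
        have g: "gamma s m \<alpha> \<beta> cstar k j = gamma s m \<alpha> \<beta> cstar k j'"
          using nk k j unfolding A_def by blast
        have ph: "phi s m \<alpha> \<beta> cstar k \<le> (\<Sum>i\<in>species_class s \<alpha> \<beta> cstar k. \<alpha> i l)" if "l \<in> {1..m}" for l
          unfolding phi_def by (rule Min_le) (use that in auto)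
        show ?thesis using g ph[OF j(1)] ph[OF j(2)] unfolding gamma_def by linarith
      qed
      have Q: "(\<Prod>l=1..s. r l ^ \<alpha> l j) = (\<Prod>l=1..s. r l ^ \<alpha> l 1)" if j: "j \<in> {1..m}" for j
      proof (rule prod_ratio)
        fix \<rho> assume "\<rho> \<in> r ` {1..s}" "\<rho> \<noteq> 1"
        then obtain i0 where i0: "i0 \<in> {1..s}" "\<rho> = r i0" "r i0 \<noteq> 1" by auto
        have A0: "A i0 \<noteq> 0" using i0 rA[OF i0(1)] by auto
        have m1: "1 \<in> {1..m}" using j by auto
        show "(\<Sum>i\<in>{i\<in>{1..s}. r i = \<rho>}. \<alpha> i j) = (\<Sum>i\<in>{i\<in>{1..s}. r i = \<rho>}. \<alpha> i 1)"
          unfolding i0(2) cls[OF i0(1) i0(3)] using sumeq[OF i0(1) A0 j m1] .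
      qed simp
      have prodx: "(\<Prod>l=1..s. x l ^ \<alpha> l j) = (\<Prod>l=1..s. r l ^ \<alpha> l 1) * (\<Prod>l=1..s. y l ^ \<alpha> l j)"
        if j: "j \<in> {1..m}" for j
      proof -
        have "(\<Prod>l=1..s. x l ^ \<alpha> l j) = (\<Prod>l=1..s. r l ^ \<alpha> l j * y l ^ \<alpha> l j)"
          by (rule prod.cong) (auto simp: xr power_mult_distrib)
        also have "\<dots> = (\<Prod>l=1..s. r l ^ \<alpha> l j) * (\<Prod>l=1..s. y l ^ \<alpha> l j)"
          by (rule prod.distrib)
        finally show ?thesis using Q[OF j] by simp
      qed
      have xss: "mass_action s m \<alpha> \<beta> \<kappa> x i = 0" if i: "i \<in> {1..s}" for i
      proof -
        have "mass_action s m \<alpha> \<beta> \<kappa> x i = (\<Prod>l=1..s. r l ^ \<alpha> l 1) * mass_action s m \<alpha> \<beta> \<kappa> y i"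
          unfolding mass_action_def sum_distrib_left
        proof (rule sum.cong[OF refl])
          fix j assume j: "j \<in> {1..m}"
          show "stoich \<alpha> \<beta> i j * (\<kappa> j * (\<Prod>l = 1..s. x l ^ \<alpha> l j)) =
            (\<Prod>l = 1..s. r l ^ \<alpha> l 1) * (stoich \<alpha> \<beta> i j * (\<kappa> j * (\<Prod>l = 1..s. y l ^ \<alpha> l j)))"
            unfolding prodx[OF j] by (simp only: mult_ac)
        qed
        then show ?thesis using yss[OF i] by simp
      qed
      show ?thesis unfolding x_def[symmetric] pos_steady_states_in_def compat_class_def
        using xo xpos xlin xss by (auto simp: less_imp_le)
    qed
    have "inj X"
    proof (rule injI)
      fix a b assume "X a = X b"
      then have "X a 1 = X b 1" by simp
      then have "\<delta> / (real a + 2) = \<delta> / (real b + 2)" using s1 A1 unfolding X_def by simp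
      then show "a = b" using \<delta>pos by (simp add: field_simps)
    qed
    then have "infinite (range X)" by (rule range_inj_infinite)
    moreover have "range X \<subseteq> ?P" using XP by auto
    ultimately show ?thesis using infinite_super by blast
  qed
qed

end
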